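(* Let $q$ be a prime power, $h\geq 4$, and let $\alpha\in\mathbb{F}_{q^h}\setminus\mathbb{F}_q$ with $\mathbb{F}_{q^h}=\mathbb{F}_q(\alpha)$. For $s,t\in\mathbb{F}_q$ let $f_{s,t}:\mathbb{F}_{q^h}\to\mathbb{F}_q$ be the $\mathbb{F}_q$-linear functional defined on the basis $1,\alpha,\dots,\alpha^{h-1}$ by $f_{s,t}(1)=1$, $f_{s,t}(\alpha^2)=s$, $f_{s,t}(\alpha^{h-1})=t$, and $f_{s,t}(\alpha^j)=0$ for all other $j\in\{1,\dots,h-2\}\setminus\{2\}$. Then there exist at least $q-1$ pairs $(s,t)\in\mathbb{F}_q^2$ such that $f=f_{s,t}$ and $\beta=1$ satisfy: (1) $f(\alpha/\beta)\neq 1$, and (2) for all $k\in\mathbb{F}_q$, $k\neq f\left(\frac{\alpha^2}{\beta}\right)+\left(f\left(\frac{\beta^2}{\alpha+k}\right)+k\right)f\left(\frac{\alpha}{\beta}\right)+k f\left(\frac{\beta^2}{\alpha+k}\right)f\left(\frac{1}{\beta}\right)$. *)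

theory Defs
  imports "HOL-Computational_Algebra.Primes"
begin

definition is_subfield :: "'a::field set \<Rightarrow> bool" where
  "is_subfield S \<longleftrightarrow> 0 \<in> S \<and> 1 \<in> S \<and>
     (\<forall>x\<in>S. \<forall>y\<in>S. x + y \<in> S \<and> x * y \<in> S) \<and>
     (\<forall>x\<in>S. - x \<in> S) \<and> (\<forall>x\<in>S. x \<noteq> 0 \<longrightarrow> inverse x \<in> S)"

definition field_adjoin :: "'a::field set \<Rightarrow> 'a \<Rightarrow> 'a set" where
  "field_adjoin K \<alpha> = \<Inter>{S. is_subfield S \<and> K \<subseteq> S \<and> \<alpha> \<in> S}"

definition basis_functional ::
    "'a::field set \<Rightarrow> 'a \<Rightarrow> nat \<Rightarrow> (nat \<Rightarrow> 'a) \<Rightarrow> 'a \<Rightarrow> 'a" where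
  "basis_functional K \<alpha> h v y =
     (THE z. \<exists>c. (\<forall>i<h. c i \<in> K) \<and> y = (\<Sum>i<h. c i * \<alpha> ^ i) \<and> z = (\<Sum>i<h. c i * v i))"

definition f_st :: "'a::field set \<Rightarrow> 'a \<Rightarrow> nat \<Rightarrow> 'a \<Rightarrow> 'a \<Rightarrow> 'a \<Rightarrow> 'a" where
  "f_st K \<alpha> h s t = basis_functional K \<alpha> h
     (\<lambda>j. if j = 0 then 1 else if j = 2 then s else if j = h - 1 then t else 0)"

end

theory Submission
  imports Defs "HOL-Computational_Algebra.Polynomial" "HOL-Library.FuncSet"
begin

locale setting =
  fixes K :: "'a::{field,finite} set" and \<alpha> :: 'a and q h :: nat
  assumes h4: "h \<ge> 4"
    and cardU: "card (UNIV :: 'a set) = q ^ h"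
    and sf: "is_subfield K" and cardK: "card K = q"
    and anK: "\<alpha> \<notin> K"
    and adj: "field_adjoin K \<alpha> = UNIV"
begin

lemma K0: "0 \<in> K" and K1: "1 \<in> K"
  and Kadd: "x \<in> K \<Longrightarrow> y \<in> K \<Longrightarrow> x + y \<in> K"
  and Kmult: "x \<in> K \<Longrightarrow> y \<in> K \<Longrightarrow> x * y \<in> K"
  and Kuminus: "x \<in> K \<Longrightarrow> - x \<in> K"
  and Kinv: "x \<in> K \<Longrightarrow> inverse x \<in> K"
  using sf unfolding is_subfield_def by (auto simp del: inverse_nonzero_iff_nonzero)

lemma Kinv': "x \<in> K \<Longrightarrow> inverse x \<in> K"
  using sf unfolding is_subfield_def by (cases "x = 0") auto

lemma Kdiff: "x \<in> K \<Longrightarrow> y \<in> K \<Longrightarrow> x - y \<in> K"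
  using Kadd Kuminus by (metis diff_conv_add_uminus)

lemma Kdiv: "x \<in> K \<Longrightarrow> y \<in> K \<Longrightarrow> x / y \<in> K"
  using Kmult Kinv' by (simp add: divide_inverse)

lemma q2: "q \<ge> 2"
proof -
  have "{0,1} \<subseteq> K" using K0 K1 by auto
  hence "card {0::'a,1} \<le> card K" by (intro card_mono) auto
  thus ?thesis using cardK by simp
qed

definition W :: "nat \<Rightarrow> 'a set" where
  "W n = {y. \<exists>c. (\<forall>i<n. c i \<in> K) \<and> y = (\<Sum>i<n. c i * \<alpha> ^ i)}"

lemma W_add: "x \<in> W n \<Longrightarrow> y \<in> W n \<Longrightarrow> x + y \<in> W n"
proof -
  assume "x \<in> W n" "y \<in> W n"
  then obtain c d where c: "\<forall>i<n. c i \<in> K" "x = (\<Sum>i<n. c i * \<alpha> ^ i)"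
    and d: "\<forall>i<n. d i \<in> K" "y = (\<Sum>i<n. d i * \<alpha> ^ i)" unfolding W_def by auto
  have "x + y = (\<Sum>i<n. (c i + d i) * \<alpha> ^ i)"
    using c d by (simp add: sum.distrib distrib_right)
  thus ?thesis unfolding W_def using c d Kadd by (intro CollectI exI[of _ "\<lambda>i. c i + d i"]) auto
qed

lemma W_smult: "a \<in> K \<Longrightarrow> x \<in> W n \<Longrightarrow> a * x \<in> W n"
proof -
  assume a: "a \<in> K" "x \<in> W n"
  then obtain c where c: "\<forall>i<n. c i \<in> K" "x = (\<Sum>i<n. c i * \<alpha> ^ i)" unfolding W_def by auto
  have "a * x = (\<Sum>i<n. (a * c i) * \<alpha> ^ i)"
    using c by (simp add: sum_distrib_left mult.assoc)
  thus ?thesis unfolding W_def using c a Kmult by (intro CollectI exI[of _ "\<lambda>i. a * c i"]) auto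
qed

lemma W_zero: "0 \<in> W n"
  unfolding W_def using K0 by (intro CollectI exI[of _ "\<lambda>i. 0"]) auto

lemma W_sum: "finite A \<Longrightarrow> (\<And>i. i \<in> A \<Longrightarrow> g i \<in> W n) \<Longrightarrow> sum g A \<in> W n"
  by (induction A rule: finite_induct) (auto intro: W_add W_zero)

lemma W_pow: "j < n \<Longrightarrow> \<alpha> ^ j \<in> W n"
proof -
  assume j: "j < n"
  have "(\<Sum>i<n. (if i = j then 1 else 0) * \<alpha> ^ i) = (\<Sum>i<n. if i = j then \<alpha> ^ i else 0)"
    by (rule sum.cong) auto
  hence "\<alpha> ^ j = (\<Sum>i<n. (if i = j then 1 else 0) * \<alpha> ^ i)"
    using j by (simp add: sum.delta)
  thus ?thesis unfolding W_def using K0 K1 by (intro CollectI exI[of _ "\<lambda>i. if i = j then 1 else 0"]) auto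
qed

lemma W_K: "n \<ge> 1 \<Longrightarrow> a \<in> K \<Longrightarrow> a \<in> W n"
  using W_smult[of a "\<alpha>^0" n] W_pow[of 0 n] by simp

lemma W_card: "card (W n) \<le> q ^ n"
proof -
  let ?F = "\<lambda>c. (\<Sum>i<n. c i * \<alpha> ^ i)"
  have "W n \<subseteq> ?F ` (PiE {..<n} (\<lambda>_. K))"
  proof
    fix y assume "y \<in> W n"
    then obtain c where c: "\<forall>i<n. c i \<in> K" "y = (\<Sum>i<n. c i * \<alpha> ^ i)" unfolding W_def by auto
    have "restrict c {..<n} \<in> PiE {..<n} (\<lambda>_. K)" using c by auto
    moreover have "y = ?F (restrict c {..<n})" using c by simp
    ultimately show "y \<in> ?F ` (PiE {..<n} (\<lambda>_. K))" by blast
  qed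
  hence "card (W n) \<le> card (?F ` (PiE {..<n} (\<lambda>_. K)))" by (intro card_mono) auto
  also have "\<dots> \<le> card (PiE {..<n} (\<lambda>_. K))" by (rule card_image_le) (simp add: finite_PiE)
  also have "\<dots> = q ^ n" by (simp add: card_PiE cardK)
  finally show ?thesis .
qed

lemma W_mult_alpha:
  assumes d: "\<alpha> ^ d \<in> W d" and x: "x \<in> W d"
  shows "\<alpha> * x \<in> W d"
proof -
  obtain c where c: "\<forall>i<d. c i \<in> K" "x = (\<Sum>i<d. c i * \<alpha> ^ i)" using x unfolding W_def by auto
  have "\<alpha> * x = (\<Sum>i<d. c i * \<alpha> ^ Suc i)"
    using c by (simp add: sum_distrib_left algebra_simps)
  also have "\<dots> \<in> W d"
  proof (rule W_sum)
    fix i assume "i \<in> {..<d}"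
    hence i: "i < d" by simp
    have "\<alpha> ^ Suc i \<in> W d"
    proof (cases "Suc i < d")
      case True thus ?thesis by (rule W_pow)
    next
      case False hence "Suc i = d" using i by simp
      thus ?thesis using d by simp
    qed
    thus "c i * \<alpha> ^ Suc i \<in> W d" using c i W_smult by blast
  qed simp
  finally show ?thesis .
qed

lemma W_mult_pow:
  assumes d: "\<alpha> ^ d \<in> W d" and x: "x \<in> W d"
  shows "\<alpha> ^ j * x \<in> W d"
proof (induction j)
  case 0 thus ?case using x by simp
next
  case (Suc j)
  have "\<alpha> ^ Suc j * x = \<alpha> * (\<alpha> ^ j * x)" by simp
  thus ?case using W_mult_alpha[OF d Suc] by (simp add: mult.assoc)
qed

lemma W_mult:
  assumes d: "\<alpha> ^ d \<in> W d" and x: "x \<in> W d" and y: "y \<in> W d"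
  shows "x * y \<in> W d"
proof -
  obtain c where c: "\<forall>i<d. c i \<in> K" "x = (\<Sum>i<d. c i * \<alpha> ^ i)" using x unfolding W_def by auto
  have "x * y = (\<Sum>i<d. c i * (\<alpha> ^ i * y))"
    using c by (simp add: sum_distrib_right mult.assoc)
  also have "\<dots> \<in> W d"
    by (rule W_sum) (use c W_smult W_mult_pow[OF d y] in auto)
  finally show ?thesis .
qed

lemma no_small_dep:
  assumes d: "\<alpha> ^ d \<in> W d" and dh: "d < h"
  shows False
proof -
  have d1: "d \<ge> 1"
  proof (rule ccontr)
    assume "\<not> d \<ge> 1" hence "d = 0" by simp
    hence "(1::'a) \<in> W 0" using d by simp
    thus False unfolding W_def by simp
  qed
  have one: "1 \<in> W d" using W_K[OF d1 K1] .
  have sub: "is_subfield (W d)"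
    unfolding is_subfield_def
  proof (intro conjI ballI impI)
    show "0 \<in> W d" by (rule W_zero)
    show "1 \<in> W d" by (rule one)
  next
    fix x y assume "x \<in> W d" "y \<in> W d"
    thus "x + y \<in> W d" "x * y \<in> W d" using W_add W_mult[OF d] by auto
  next
    fix x assume "x \<in> W d"
    thus "- x \<in> W d" using W_smult[OF Kuminus[OF K1]] by fastforce
  next
    fix x assume x: "x \<in> W d" "x \<noteq> 0"
    have "(\<lambda>y. x * y) ` W d = W d"
    proof (rule endo_inj_surj)
      show "finite (W d)" by simp
      show "(\<lambda>y. x * y) ` W d \<subseteq> W d" using W_mult[OF d x(1)] by auto
      show "inj_on (\<lambda>y. x * y) (W d)" using x(2) by (auto intro: inj_onI)
    qed
    then obtain y where y: "y \<in> W d" "x * y = 1" using one by (metis imageE)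
    hence "inverse x = y" using x(2) by (metis inverse_unique)
    thus "inverse x \<in> W d" using y by simp
  qed
  have "K \<subseteq> W d" using W_K[OF d1] by auto
  moreover have "\<alpha> \<in> W d" using W_mult_alpha[OF d one] by simp
  ultimately have "field_adjoin K \<alpha> \<subseteq> W d" unfolding field_adjoin_def using sub by blast
  hence "W d = UNIV" using adj by auto
  hence "q ^ h \<le> q ^ d" using W_card[of d] cardU by simp
  moreover have "q ^ d < q ^ h" using q2 dh by (intro power_strict_increasing) auto
  ultimately show False by simp
qed

lemma indep:
  assumes c: "\<forall>i<h. c i \<in> K" and z: "(\<Sum>i<h. c i * \<alpha> ^ i) = 0"
  shows "\<forall>i<h. c i = 0"
proof (rule ccontr)
  assume "\<not> (\<forall>i<h. c i = 0)"
  hence ne: "{i. i < h \<and> c i \<noteq> 0} \<noteq> {}" by auto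
  define j where "j = Max {i. i < h \<and> c i \<noteq> 0}"
  have fin: "finite {i. i < h \<and> c i \<noteq> 0}" by simp
  have j: "j < h" "c j \<noteq> 0" using Max_in[OF fin ne] unfolding j_def by auto
  have above: "c i = 0" if "j < i" "i < h" for i
  proof (rule ccontr)
    assume "c i \<noteq> 0"
    hence "i \<le> j" unfolding j_def using that(2) by (intro Max_ge[OF fin]) simp
    thus False using that(1) by simp
  qed
  have "(\<Sum>i<h. c i * \<alpha> ^ i) = (\<Sum>i<Suc j. c i * \<alpha> ^ i)"
  proof (rule sum.mono_neutral_right)
    show "finite {..<h}" by simp
    show "{..<Suc j} \<subseteq> {..<h}" using j by auto
    show "\<forall>i\<in>{..<h} - {..<Suc j}. c i * \<alpha> ^ i = 0" using above by auto
  qed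
  hence "(\<Sum>i<j. c i * \<alpha> ^ i) + c j * \<alpha> ^ j = 0" using z by simp
  hence "- (\<Sum>i<j. c i * \<alpha> ^ i) = c j * \<alpha> ^ j" by (metis neg_eq_iff_add_eq_0)
  hence "\<alpha> ^ j = (- (\<Sum>i<j. c i * \<alpha> ^ i)) / c j" using j(2) by (simp add: eq_divide_eq mult.commute)
  also have "\<dots> = (\<Sum>i<j. (- c i / c j) * \<alpha> ^ i)"
    by (simp add: sum_divide_distrib sum_negf[symmetric])
  finally have "\<alpha> ^ j = (\<Sum>i<j. (- c i / c j) * \<alpha> ^ i)" .
  also have "\<dots> \<in> W j" unfolding W_def
  proof (intro CollectI exI[of _ "\<lambda>i. - c i / c j"] conjI allI impI refl)
    fix i assume "i < j" thus "- c i / c j \<in> K" using c j Kdiv Kuminus by simp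
  qed
  finally show False using no_small_dep j(1) by blast
qed

lemma uniq:
  assumes c: "\<forall>i<h. c i \<in> K" and d: "\<forall>i<h. d i \<in> K"
    and e: "(\<Sum>i<h. c i * \<alpha> ^ i) = (\<Sum>i<h. d i * \<alpha> ^ i)"
  shows "\<forall>i<h. c i = d i"
proof -
  have "(\<Sum>i<h. (c i - d i) * \<alpha> ^ i) = 0"
    using e by (simp add: left_diff_distrib sum_subtractf)
  hence "\<forall>i<h. c i - d i = 0" using c d Kdiff by (intro indep) auto
  thus ?thesis by simp
qed

lemma span: "\<exists>c. (\<forall>i<h. c i \<in> K) \<and> y = (\<Sum>i<h. c i * \<alpha> ^ i)"
proof -
  let ?F = "\<lambda>c. (\<Sum>i<h. c i * \<alpha> ^ i)"
  let ?P = "PiE {..<h} (\<lambda>_. K)"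
  have inj: "inj_on ?F ?P"
  proof (rule inj_onI)
    fix c d assume cd: "c \<in> ?P" "d \<in> ?P" "?F c = ?F d"
    hence "\<forall>i<h. c i = d i" by (intro uniq) auto
    thus "c = d" using cd by (intro PiE_ext[OF cd(1,2)]) auto
  qed
  have "card (?F ` ?P) = q ^ h" using card_image[OF inj] by (simp add: card_PiE cardK)
  hence "?F ` ?P = UNIV" using cardU by (intro card_subset_eq) auto
  hence "y \<in> ?F ` ?P" by simp
  thus ?thesis by auto
qed

lemma bf_eval:
  assumes c: "\<forall>i<h. c i \<in> K"
  shows "basis_functional K \<alpha> h v (\<Sum>i<h. c i * \<alpha> ^ i) = (\<Sum>i<h. c i * v i)"
  unfolding basis_functional_def
proof (rule the_equality)
  show "\<exists>c'. (\<forall>i<h. c' i \<in> K) \<and> (\<Sum>i<h. c i * \<alpha> ^ i) = (\<Sum>i<h. c' i * \<alpha> ^ i) \<and>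
         (\<Sum>i<h. c i * v i) = (\<Sum>i<h. c' i * v i)" using c by blast
next
  fix z assume "\<exists>c'. (\<forall>i<h. c' i \<in> K) \<and> (\<Sum>i<h. c i * \<alpha> ^ i) = (\<Sum>i<h. c' i * \<alpha> ^ i) \<and>
         z = (\<Sum>i<h. c' i * v i)"
  then obtain c' where c': "\<forall>i<h. c' i \<in> K" "(\<Sum>i<h. c i * \<alpha> ^ i) = (\<Sum>i<h. c' i * \<alpha> ^ i)"
    "z = (\<Sum>i<h. c' i * v i)" by blast
  have "\<forall>i<h. c i = c' i" using uniq[OF c c'(1) c'(2)] .
  thus "z = (\<Sum>i<h. c i * v i)" using c'(3) by (auto intro: sum.cong)
qed

lemma f_eval:
  assumes c: "\<forall>i<h. c i \<in> K"
  shows "f_st K \<alpha> h s t (\<Sum>i<h. c i * \<alpha> ^ i) = c 0 + s * c 2 + t * c (h - 1)"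
proof -
  let ?v = "\<lambda>j. if j = 0 then 1 else if j = 2 then s else if j = h - 1 then t else (0::'a)"
  have "(\<Sum>i<h. c i * ?v i) = (\<Sum>i<h. (if i = 0 then c i else 0) + (if i = 2 then s * c i else 0)
           + (if i = h - 1 then t * c i else 0))"
    by (rule sum.cong) (use h4 in auto)
  also have "\<dots> = c 0 + s * c 2 + t * c (h - 1)"
    using h4 by (simp add: sum.distrib sum.delta)
  finally show ?thesis unfolding f_st_def using bf_eval[OF c] by simp
qed

lemma f_pow:
  assumes j: "j < h"
  shows "f_st K \<alpha> h s t (\<alpha> ^ j) = (if j = 0 then 1 else 0) + s * (if j = 2 then 1 else 0)
            + t * (if j = h - 1 then 1 else 0)"
proof -
  have "(\<Sum>i<h. (if i = j then 1 else 0) * \<alpha> ^ i) = (\<Sum>i<h. if i = j then \<alpha> ^ i else 0)"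
    by (rule sum.cong) auto
  hence e: "\<alpha> ^ j = (\<Sum>i<h. (if i = j then 1 else 0) * \<alpha> ^ i)"
    using j by (simp add: sum.delta)
  show ?thesis unfolding e by (subst f_eval) (use K0 K1 in auto)
qed

lemma poly_as_sum:
  fixes r :: "'a poly"
  assumes "degree r < h"
  shows "poly r x = (\<Sum>i<h. coeff r i * x ^ i)"
proof -
  have "poly r x = (\<Sum>i\<le>degree r. coeff r i * x ^ i)" by (simp add: poly_altdef)
  also have "\<dots> = (\<Sum>i<h. coeff r i * x ^ i)"
  proof (rule sum.mono_neutral_left)
    show "finite {..<h}" by simp
    show "{..degree r} \<subseteq> {..<h}" using assms by auto
    show "\<forall>i\<in>{..<h} - {..degree r}. coeff r i * x ^ i = 0" by (auto simp: coeff_eq_0)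
  qed
  finally show ?thesis .
qed

lemma top_nonzero:
  assumes k: "k \<in> K" and c: "\<forall>i<h. c i \<in> K" and e: "1 / (\<alpha> + k) = (\<Sum>i<h. c i * \<alpha> ^ i)"
  shows "c (h - 1) \<noteq> 0"
proof
  assume c0: "c (h - 1) = 0"
  have hs: "Suc (h - 1) = h" using h4 by simp
  have "(\<Sum>i<Suc (h - 1). c i * \<alpha> ^ i) = (\<Sum>i<h - 1. c i * \<alpha> ^ i) + c (h - 1) * \<alpha> ^ (h - 1)"
    by (rule sum.lessThan_Suc)
  hence y: "1 / (\<alpha> + k) = (\<Sum>i<h - 1. c i * \<alpha> ^ i)" using e c0 hs by simp
  define p where "p = (\<Sum>i<h - 1. monom (c i) i)"
  have cp: "coeff p i = (if i < h - 1 then c i else 0)" for i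
    unfolding p_def by (simp add: coeff_sum coeff_monom sum.delta)
  have cpK: "coeff p i \<in> K" for i using cp c K0 by auto
  have pa: "poly p \<alpha> = 1 / (\<alpha> + k)" unfolding p_def by (simp add: poly_sum poly_monom y)
  have ne: "\<alpha> + k \<noteq> 0"
  proof
    assume "\<alpha> + k = 0" hence "\<alpha> = - k" by (simp add: eq_neg_iff_add_eq_0)
    thus False using anK Kuminus k by simp
  qed
  define r where "r = [:k, 1:] * p - 1"
  have m: "[:k, 1:] * p = smult k p + pCons 0 p" by (simp add: mult_pCons_left)
  have ra: "poly r \<alpha> = 0" unfolding r_def using pa ne by (simp add: field_simps)
  have crK: "coeff r i \<in> K" for i
  proof (cases i)
    case 0 thus ?thesis unfolding r_def m using Kdiff[OF Kmult[OF k cpK] K1] by simp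
  next
    case (Suc n) thus ?thesis unfolding r_def m using cpK k K0 by (simp add: Kmult Kdiff Kadd)
  qed
  have hi: "coeff r i = 0" if ih: "i > h - 1" for i
  proof -
    obtain n where n: "i = Suc n" using ih by (cases i) auto
    have "n \<ge> h - 1" using ih n by simp
    thus ?thesis using n ih unfolding r_def m by (simp add: cp)
  qed
  have "degree r \<le> h - 1" using hi by (intro degree_le) auto
  hence dr: "degree r < h" using h4 by simp
  have "(\<Sum>i<h. coeff r i * \<alpha> ^ i) = 0" using ra poly_as_sum[OF dr] by simp
  hence lo: "\<forall>i<h. coeff r i = 0" using crK by (intro indep) auto
  have "r = 0"
  proof (rule poly_eqI)
    fix i show "coeff r i = coeff 0 i"
      using lo hi[of i] hs by (cases "i < h") auto
  qed
  hence one: "[:k, 1:] * p = 1" unfolding r_def by simp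
  have "p \<noteq> 0" using one by auto
  hence "degree ([:k, 1:] * p) = 1 + degree p" by (subst degree_mult_eq) auto
  thus False using one by simp
qed

lemma main:
  "card {(s, t). s \<in> K \<and> t \<in> K \<and>
            (let f = f_st K \<alpha> h s t; \<beta> = (1::'a) in
               f (\<alpha> / \<beta>) \<noteq> 1 \<and>
               (\<forall>k\<in>K. k \<noteq> f (\<alpha>^2 / \<beta>) + (f (\<beta>^2 / (\<alpha> + k)) + k) * f (\<alpha> / \<beta>)
                              + k * f (\<beta>^2 / (\<alpha> + k)) * f (1 / \<beta>)))} \<ge> q - 1"
  (is "card ?G \<ge> _")
proof -
  have "\<forall>k. \<exists>c. (\<forall>i<h. c i \<in> K) \<and> 1 / (\<alpha> + k) = (\<Sum>i<h. c i * \<alpha> ^ i)" using span by blast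
  from choice[OF this] obtain C where C0: "\<forall>k. (\<forall>i<h. C k i \<in> K) \<and> 1 / (\<alpha> + k) = (\<Sum>i<h. C k i * \<alpha> ^ i)"
    by blast
  have CK: "\<forall>i<h. C k i \<in> K" and Ce: "1 / (\<alpha> + k) = (\<Sum>i<h. C k i * \<alpha> ^ i)" for k
    using C0 by auto
  have fval: "f_st K \<alpha> h s t (1 / (\<alpha> + k)) = C k 0 + s * C k 2 + t * C k (h - 1)" for s t k
    unfolding Ce[of k] by (rule f_eval[OF CK])
  have Ch: "k \<in> K \<Longrightarrow> C k (h - 1) \<noteq> 0" for k using top_nonzero[OF _ CK Ce] by blast
  have fa: "f_st K \<alpha> h s t \<alpha> = 0" for s t using f_pow[of 1 s t] h4 by simp
  have f1: "f_st K \<alpha> h s t 1 = 1" for s t using f_pow[of 0 s t] h4 by simp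
  have f2: "f_st K \<alpha> h s t (\<alpha> ^ 2) = s" for s t using f_pow[of 2 s t] h4 by simp
  have ex: "\<exists>t\<in>K. (s, t) \<in> ?G" if s: "s \<in> K" "s \<noteq> 0" for s
  proof -
    define B where "B = (\<lambda>k. (k - s - k * (C k 0 + s * C k 2)) / (k * C k (h - 1))) ` (K - {0})"
    have "card B \<le> card (K - {0})" unfolding B_def by (rule card_image_le) simp
    also have "\<dots> = q - 1" using cardK K0 by (simp add: card_Diff_singleton)
    also have "\<dots> < card K" using cardK q2 by simp
    finally have "\<not> K \<subseteq> B" using card_mono[of B K] by auto
    then obtain t where t: "t \<in> K" "t \<notin> B" by blast
    have "\<forall>k\<in>K. k \<noteq> s + k * (C k 0 + s * C k 2 + t * C k (h - 1))"
    proof (intro ballI notI)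
      fix k assume k: "k \<in> K" and eq: "k = s + k * (C k 0 + s * C k 2 + t * C k (h - 1))"
      show False
      proof (cases "k = 0")
        case True thus False using eq s by simp
      next
        case False
        have "k * C k (h - 1) \<noteq> 0" using False Ch[OF k] by simp
        moreover have "t * (k * C k (h - 1)) = k - s - k * (C k 0 + s * C k 2)"
          using eq by (simp add: algebra_simps)
        ultimately have "t = (k - s - k * (C k 0 + s * C k 2)) / (k * C k (h - 1))"
          by (simp add: eq_divide_eq)
        hence "t \<in> B" unfolding B_def using k False by blast
        thus False using t by simp
      qed
    qed
    hence "(s, t) \<in> ?G" using s t by (simp add: Let_def fa f1 f2 fval)
    thus ?thesis using t by blast
  qed
  hence "\<forall>s\<in>K - {0}. \<exists>t. t \<in> K \<and> (s, t) \<in> ?G" by blast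
  from bchoice[OF this] obtain g where g: "\<forall>s\<in>K - {0}. g s \<in> K \<and> (s, g s) \<in> ?G"
    by blast
  have sub: "(\<lambda>s. (s, g s)) ` (K - {0}) \<subseteq> ?G" using g by blast
  have "card ((\<lambda>s. (s, g s)) ` (K - {0})) = card (K - {0})"
    by (rule card_image) (auto intro: inj_onI)
  also have "\<dots> = q - 1" using cardK K0 by (simp add: card_Diff_singleton)
  finally show ?thesis using card_mono[OF _ sub] by simp
qed

end

theorem proposition4p4:
  fixes K :: "'a::{field,finite} set" and \<alpha> :: 'a and q h :: nat
  assumes "\<exists>p k. prime p \<and> k > 0 \<and> q = p ^ k"
    and "h \<ge> 4"
    and "card (UNIV :: 'a set) = q ^ h"
    and "is_subfield K" and "card K = q"
    and "\<alpha> \<notin> K"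
    and "field_adjoin K \<alpha> = UNIV"
  shows "card {(s, t). s \<in> K \<and> t \<in> K \<and>
            (let f = f_st K \<alpha> h s t; \<beta> = (1::'a) in
               f (\<alpha> / \<beta>) \<noteq> 1 \<and>
               (\<forall>k\<in>K. k \<noteq> f (\<alpha>^2 / \<beta>) + (f (\<beta>^2 / (\<alpha> + k)) + k) * f (\<alpha> / \<beta>)
                              + k * f (\<beta>^2 / (\<alpha> + k)) * f (1 / \<beta>)))} \<ge> q - 1"
proof -
  interpret setting K \<alpha> q h using assms by unfold_locales auto
  show ?thesis by (rule main)
qed

end
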